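(* Let $A$ be a unital separable $C^*$-algebra and let $\alpha\in{\rm Aut}(A)$ be approximately inner. Suppose $\{p_j\}_{j\ge1}$ is a central sequence of projections in $A$. Then there exists a central sequence of partial isometries $\{w_j\}_{j\ge1}$ in $A$ such that $w_j^*w_j=p_j$ and $w_jw_j^*=\alpha(p_j)$ for all $j$.
   Context: An automorphism $\alpha$ of a unital $C^*$-algebra $A$ is approximately inner if there is a sequence of unitaries $u_n\in A$ with $\|u_n^*au_n-\alpha(a)\|\to0$ for all $a\in A$. A sequence $\{x_j\}$ in $A$ is central if $\|x_ja-ax_j\|\to0$ as $j\to\infty$ for every $a\in A$. *)

theory Defs
  imports "HOL-Analysis.Analysis"
begin

class unital_cstar_algebra = real_normed_algebra_1 + banach +
  fixes adj :: "'a \<Rightarrow> 'a"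
    and scaleC :: "complex \<Rightarrow> 'a \<Rightarrow> 'a"
  assumes scaleC_add_right: "scaleC c (x + y) = scaleC c x + scaleC c y"
    and scaleC_add_left: "scaleC (c + d) x = scaleC c x + scaleC d x"
    and scaleC_scaleC: "scaleC c (scaleC d x) = scaleC (c * d) x"
    and scaleC_one: "scaleC 1 x = x"
    and scaleR_scaleC: "scaleR r x = scaleC (complex_of_real r) x"
    and norm_scaleC: "norm (scaleC c x) = cmod c * norm x"
    and mult_scaleC_left: "scaleC c x * y = scaleC c (x * y)"
    and mult_scaleC_right: "x * scaleC c y = scaleC c (x * y)"
    and adj_adj: "adj (adj x) = x"
    and adj_add: "adj (x + y) = adj x + adj y"
    and adj_mult: "adj (x * y) = adj y * adj x"
    and adj_scaleC: "adj (scaleC c x) = scaleC (cnj c) (adj x)"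
    and cstar_identity: "norm (adj x * x) = (norm x)\<^sup>2"

definition separable_space :: "'a::metric_space itself \<Rightarrow> bool" where
  "separable_space _ \<longleftrightarrow> (\<exists>D::'a set. countable D \<and> closure D = UNIV)"

definition is_automorphism :: "('a::unital_cstar_algebra \<Rightarrow> 'a) \<Rightarrow> bool" where
  "is_automorphism \<alpha> \<longleftrightarrow> bij \<alpha>
     \<and> (\<forall>x y. \<alpha> (x + y) = \<alpha> x + \<alpha> y)
     \<and> (\<forall>x y. \<alpha> (x * y) = \<alpha> x * \<alpha> y)
     \<and> (\<forall>c x. \<alpha> (scaleC c x) = scaleC c (\<alpha> x))
     \<and> (\<forall>x. \<alpha> (adj x) = adj (\<alpha> x))"

definition unitary :: "'a::unital_cstar_algebra \<Rightarrow> bool" where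
  "unitary u \<longleftrightarrow> adj u * u = 1 \<and> u * adj u = 1"

definition approximately_inner :: "('a::unital_cstar_algebra \<Rightarrow> 'a) \<Rightarrow> bool" where
  "approximately_inner \<alpha> \<longleftrightarrow>
     (\<exists>u::nat \<Rightarrow> 'a. (\<forall>n. unitary (u n)) \<and>
        (\<forall>a. (\<lambda>n. norm (adj (u n) * a * u n - \<alpha> a)) \<longlonglongrightarrow> 0))"

definition projection :: "'a::unital_cstar_algebra \<Rightarrow> bool" where
  "projection p \<longleftrightarrow> adj p = p \<and> p * p = p"

definition partial_isometry :: "'a::unital_cstar_algebra \<Rightarrow> bool" where
  "partial_isometry w \<longleftrightarrow> projection (adj w * w)"

definition central_sequence :: "(nat \<Rightarrow> 'a::unital_cstar_algebra) \<Rightarrow> bool" where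
  "central_sequence x \<longleftrightarrow> (\<forall>a. (\<lambda>j. norm (x j * a - a * x j)) \<longlonglongrightarrow> 0)"

end

theory Submission
  imports Defs
begin

lemma norm3: "norm (a + b + c) \<le> norm a + norm b + norm (c::'a::real_normed_vector)"
  using norm_triangle_ineq[of "a+b" c] norm_triangle_ineq[of a b] by linarith

lemma norm3m: "norm (a + b - c) \<le> norm a + norm b + norm (c::'a::real_normed_vector)"
  using norm_triangle_ineq4[of "a+b" c] norm_triangle_ineq[of a b] by linarith

lemma adj_zero: "adj (0::'a::unital_cstar_algebra) = 0"
  by (metis add_cancel_right_right adj_add)

lemma adj_minus: "adj (- x) = - adj (x::'a::unital_cstar_algebra)"
  by (metis add.right_inverse adj_add adj_zero minus_unique)

lemma adj_diff: "adj (x - y) = adj x - adj (y::'a::unital_cstar_algebra)"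
  using adj_add[of x "- y"] by (simp add: adj_minus)

lemma adj_one: "adj (1::'a::unital_cstar_algebra) = 1"
  by (metis adj_adj adj_mult mult.right_neutral mult_1_left)

lemma adj_scaleR: "adj (scaleR r x) = scaleR r (adj (x::'a::unital_cstar_algebra))"
  by (simp add: scaleR_scaleC adj_scaleC)

lemma norm_le_adj: "norm (x::'a::unital_cstar_algebra) \<le> norm (adj x)"
proof -
  have "(norm x)^2 \<le> norm (adj x) * norm x"
    by (metis cstar_identity norm_mult_ineq)
  then show ?thesis
    by (cases "norm x = 0") (auto simp: power2_eq_square)
qed

lemma norm_adj: "norm (adj x) = norm (x::'a::unital_cstar_algebra)"
  by (metis norm_le_adj adj_adj antisym)

lemma norm_le_one_if: "adj x * x = p \<Longrightarrow> norm p \<le> 1 \<Longrightarrow> norm (x::'a::unital_cstar_algebra) \<le> 1"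
proof -
  assume a: "adj x * x = p" and b: "norm p \<le> 1"
  have "(norm x)^2 = norm p" using cstar_identity[of x] a by simp
  then have "(norm x)^2 \<le> 1^2" using b by simp
  then show ?thesis by (rule power2_le_imp_le) simp
qed

lemma proj_norm: "projection p \<Longrightarrow> norm (p::'a::unital_cstar_algebra) \<le> 1"
proof -
  assume "projection p"
  then have "(norm p)^2 = norm p" by (metis projection_def cstar_identity)
  then show ?thesis
    by (cases "norm p = 0") (auto simp: power2_eq_square)
qed

lemma unitary_norm: "unitary u \<Longrightarrow> norm (u::'a::unital_cstar_algebra) \<le> 1"
  by (metis norm_le_one_if norm_one order_refl unitary_def)

lemma unitary_norm_adj: "unitary u \<Longrightarrow> norm (adj u::'a::unital_cstar_algebra) \<le> 1"
  by (simp add: norm_adj unitary_norm)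

lemma continuous_adj: "continuous_on UNIV (adj::'a::unital_cstar_algebra \<Rightarrow> 'a)"
proof -
  have "dist (adj x) (adj y) \<le> 1 * dist x y" for x y :: 'a
    by (simp add: dist_norm adj_diff[symmetric] norm_adj)
  then show ?thesis
    by (metis lipschitz_on_continuous_on lipschitz_onI zero_le_one)
qed


lemma sq_diff_norm: "norm (k*k - k'*k') \<le> (norm k + norm k') * norm (k - (k'::'a::real_normed_algebra))"
proof -
  have "k*k - k'*k' = k*(k-k') + (k-k')*k'" by (simp add: algebra_simps)
  then have "norm (k*k - k'*k') \<le> norm k * norm (k-k') + norm (k-k') * norm k'"
    by (metis norm_mult_ineq norm_triangle_le add_mono)
  then show ?thesis by (simp add: algebra_simps)
qed

lemma aux1: "(a::real) \<le> 1/8 * (1/16) \<Longrightarrow> b \<le> 1/8*(1/8) \<Longrightarrow> c \<le> 1/8 * (1/8) * (1/16) \<Longrightarrow> t \<le> (h + a + a + b + c)/2 \<Longrightarrow> h \<le> 1/16 \<Longrightarrow> t \<le> 1/8"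
  by argo

lemma aux2: "(k::real) \<le> (h + a + a + b + c)/2 \<Longrightarrow> a \<le> k * (1/16) \<Longrightarrow> b \<le> k * (1/8) \<Longrightarrow> c \<le> k * (1/8) * (1/16) \<Longrightarrow> 0 \<le> k \<Longrightarrow> k \<le> h"
  by argo

lemma fp:
  fixes e h :: "'a::unital_cstar_algebra"
  assumes pe: "projection e" and ha: "adj h = h" and eh: "e*h = h" and he: "h*e = h"
    and hn: "norm h \<le> 1/16"
  shows "\<exists>k. adj k = k \<and> e*k = k \<and> k*e = k \<and> k*h = h*k \<and> norm k \<le> norm h
           \<and> (e+k)*(e-h)*(e+k) = e"
proof -
  have ee: "e*e = e" and ea: "adj e = e" using pe by (auto simp: projection_def)
  define S where "S = {k::'a. norm k \<le> 1/8 \<and> adj k = k \<and> e*k = k \<and> k*e = k \<and> k*h = h*k}"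
  define T where "T k = scaleR (1/2) (h + k*h + k*h - k*k + k*k*h)" for k :: 'a
  have "closed S" unfolding S_def
    apply (intro closed_Collect_conj closed_Collect_le closed_Collect_eq continuous_adj continuous_intros)
    done
  then have cS: "complete S" by (simp add: complete_eq_closed)
  have S0: "0 \<in> S" by (simp add: S_def adj_zero)
  have Tn: "norm (T k) \<le> (norm h + norm k * norm h + norm k * norm h + norm k * norm k + norm k * norm k * norm h)/2" for k
  proof -
    have "norm (h + k*h + k*h - k*k + k*k*h) \<le> norm h + norm (k*h) + norm (k*h) + norm (k*k) + norm (k*k*h)"
      by (smt (verit) norm_triangle_ineq norm_triangle_ineq4)
    also have "\<dots> \<le> norm h + norm k * norm h + norm k * norm h + norm k * norm k + norm k * norm k * norm h"
      by (intro add_mono order_refl norm_mult_ineq order_trans[OF norm_mult_ineq] mult_right_mono) auto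
    finally have X: "norm (h + k*h + k*h - k*k + k*k*h) \<le> norm h + norm k * norm h + norm k * norm h + norm k * norm k + norm k * norm k * norm h" .
    have "norm (T k) = norm (h + k*h + k*h - k*k + k*k*h) / 2" by (simp add: T_def)
    then show ?thesis using X by (simp add: algebra_simps)
  qed
  have TS: "T ` S \<subseteq> S"
  proof
    fix y assume "y \<in> T ` S"
    then obtain k where kS: "k \<in> S" and y: "y = T k" by auto
    have kn: "norm k \<le> 1/8" and ka: "adj k = k" and ek: "e*k = k" and ke: "k*e = k" and kh: "k*h = h*k"
      using kS by (auto simp: S_def)
    have "norm k * norm h \<le> 1/8 * (1/16)" by (intro mult_mono kn hn) auto
    moreover have "norm k * norm k \<le> 1/8 * (1/8)" by (intro mult_mono kn) auto
    moreover have "norm k * norm k * norm h \<le> 1/8 * (1/8) * (1/16)" by (intro mult_mono kn hn) auto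
    ultimately have "norm (T k) \<le> 1/8" using Tn[of k] hn by (rule aux1)
    moreover have "adj (T k) = T k"
      by (simp add: T_def adj_scaleR adj_add adj_diff adj_mult ka ha kh mult.assoc) (metis mult.assoc kh)
    moreover have "e * T k = T k"
      by (simp add: T_def scaleR_right_distrib algebra_simps ek eh flip: mult.assoc)
    moreover have "T k * e = T k"
      by (simp add: T_def scaleR_right_distrib algebra_simps ke he mult.assoc)
    moreover have "T k * h = h * T k"
    proof -
      have c1: "(k*k)*h = h*(k*k)" by (metis mult.assoc kh)
      have c2: "h*(k*k)*h = h*(h*(k*k))" by (metis mult.assoc c1)
      have c3: "(k*h)*h = h*(k*h)" by (metis mult.assoc kh)
      show ?thesis unfolding T_def
        by (simp only: mult_scaleR_left mult_scaleR_right distrib_left distrib_right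
            left_diff_distrib right_diff_distrib c1 c2 c3)
    qed
    ultimately show "y \<in> S" by (simp add: S_def y)
  qed
  have lip: "dist (T x) (T y) \<le> 1/2 * dist x y" if "x \<in> S" "y \<in> S" for x y
  proof -
    have xn: "norm x \<le> 1/8" and yn: "norm y \<le> 1/8" using that by (auto simp: S_def)
    have "T x - T y = scaleR (1/2) ((x-y)*h + (x-y)*h - (x*x - y*y) + (x*x - y*y)*h)"
      by (simp add: T_def algebra_simps)
    then have "norm (T x - T y) = (1/2) * norm ((x-y)*h + (x-y)*h - (x*x - y*y) + (x*x - y*y)*h)"
      by simp
    also have "norm ((x-y)*h + (x-y)*h - (x*x - y*y) + (x*x - y*y)*h)
        \<le> norm ((x-y)*h) + norm ((x-y)*h) + norm (x*x - y*y) + norm ((x*x - y*y)*h)"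
      by (smt (verit) norm_triangle_ineq norm_triangle_ineq4)
    also have "\<dots> \<le> norm (x-y) * norm h + norm (x-y) * norm h + norm (x*x - y*y) + norm (x*x - y*y) * norm h"
      by (intro add_mono norm_mult_ineq order_refl)
    also have "\<dots> \<le> norm (x-y) * (1/16) + norm (x-y) * (1/16) + (1/4) * norm (x-y) + (1/4) * norm (x-y) * (1/16)"
    proof -
      have q: "norm (x*x - y*y) \<le> (1/4) * norm (x-y)"
      proof -
        have "(norm x + norm y) * norm (x-y) \<le> (1/4) * norm (x-y)"
          by (rule mult_right_mono) (use xn yn in auto)
        then show ?thesis using sq_diff_norm[of x y] by linarith
      qed
      show ?thesis
        by (intro add_mono mult_mono q hn order_refl) auto
    qed
    also have "\<dots> \<le> 1 * norm (x - y)" by simp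
    finally show ?thesis by (simp add: dist_norm)
  qed
  have "\<exists>!x\<in>S. T x = x"
    by (rule Banach_fix[OF cS _ _ _ TS lip]) (use S0 in auto)
  then obtain k where kS: "k \<in> S" and fk: "T k = k" by blast
  have kn: "norm k \<le> 1/8" and ka: "adj k = k" and ek: "e*k = k" and ke: "k*e = k" and kh: "k*h = h*k"
    using kS by (auto simp: S_def)
  have "norm k \<le> (norm h + norm k * norm h + norm k * norm h + norm k * norm k + norm k * norm k * norm h)/2"
    using Tn[of k] fk by simp
  moreover have "norm k * norm h \<le> norm k * (1/16)" by (intro mult_left_mono hn) auto
  moreover have "norm k * norm k \<le> norm k * (1/8)" by (intro mult_left_mono kn) auto
  moreover have "norm k * norm k * norm h \<le> norm k * (1/8) * (1/16)"
    by (intro mult_mono mult_left_mono kn hn) auto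
  ultimately have "norm k \<le> norm h" using aux2 norm_ge_zero by blast
  moreover have "(e+k)*(e-h)*(e+k) = e"
  proof -
    have eq: "k + k = h + k*h + k*h - k*k + k*k*h"
    proof -
      have "h + k*h + k*h - k*k + k*k*h = scaleR 2 (scaleR (1/2) (h + k*h + k*h - k*k + k*k*h))"
        by simp
      also have "\<dots> = scaleR 2 k" using fk by (simp add: T_def)
      also have "\<dots> = k + k" by (simp add: scaleR_2)
      finally show ?thesis by simp
    qed
    have s1: "(e+k)*(e-h) = e - h + k - k*h" by (simp add: algebra_simps ee eh ke)
    have s3: "k*h*k = k*k*h" by (metis kh mult.assoc)
    have "(e+k)*(e-h)*(e+k) = (e - h + k - k*h)*(e+k)" using s1 by simp
    also have "\<dots> = e + k - h - h*k + k + k*k - k*h - k*h*k" by (simp add: algebra_simps ee he ke ek)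
    also have "\<dots> = e + k - h - k*h + k + k*k - k*h - k*k*h" by (simp only: s3 kh[symmetric])
    also have "\<dots> = e + (k + k) - h - (k*h + k*h) + k*k - k*k*h" by (simp add: algebra_simps)
    also have "\<dots> = e" by (simp add: eq)
    finally show ?thesis .
  qed
  ultimately show ?thesis using ka ek ke kh by blast
qed


lemma norm_mult_le1: "norm a \<le> 1 \<Longrightarrow> norm (a * b) \<le> norm (b::'a::real_normed_algebra)"
  by (meson mult_left_le_one_le norm_ge_zero norm_mult_ineq order_trans)

lemma norm_mult_le1': "norm b \<le> 1 \<Longrightarrow> norm (a * b) \<le> norm (a::'a::real_normed_algebra)"
  by (meson mult_right_le_one_le norm_ge_zero norm_mult_ineq order_trans)

lemma pi_lemma:
  fixes e f :: "'a::unital_cstar_algebra"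
  assumes pe: "projection e" and pf: "projection f" and ef: "norm (e - f) \<le> 1/16"
  shows "\<exists>v. adj v * v = e \<and> v * adj v = f \<and> norm (v - e) \<le> 2 * norm (e - f)"
proof -
  have ee: "e * e = e" and ea: "adj e = e" using pe by (auto simp: projection_def)
  have ff: "f * f = f" and fa: "adj f = f" using pf by (auto simp: projection_def)
  have en: "norm e \<le> 1" and fn: "norm f \<le> 1" using pe pf proj_norm by auto
  define h where "h = e - e * f * e"
  have ha: "adj h = h" by (simp add: h_def adj_diff adj_mult ea fa mult.assoc)
  have eh: "e * h = h" by (simp add: h_def algebra_simps ee flip: mult.assoc)
  have he: "h * e = h" by (simp add: h_def algebra_simps ee mult.assoc)
  have "h = e * (e-f) * e" by (simp add: h_def algebra_simps ee)
  then have hn0: "norm h \<le> norm (e - f)"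
    by (metis en norm_mult_le1 norm_mult_le1' order_trans)
  then have hn: "norm h \<le> 1/16" using ef by linarith
  obtain k where ka: "adj k = k" and ek: "e * k = k" and ke: "k * e = k" and kh: "k * h = h * k"
    and kn: "norm k \<le> norm h" and keq: "(e+k) * (e-h) * (e+k) = e"
    using fp[OF pe ha eh he hn] by blast
  define s where "s = e + k"
  have sa: "adj s = s" by (simp add: s_def adj_add ea ka)
  have es: "e * s = s" by (simp add: s_def distrib_left ee ek)
  have se: "s * e = s" by (simp add: s_def distrib_right ee ke)
  have efe: "e - h = e * f * e" by (simp add: h_def)
  have seq: "s * (e * f * e) * s = e" using keq by (simp add: s_def efe)
  define v where "v = f * e * s"
  have va: "adj v = s * e * f" by (simp add: v_def adj_mult sa ea fa mult.assoc)
  have vv: "adj v * v = e"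
  proof -
    have "adj v * v = s * e * f * (f * e * s)" by (simp only: va) (simp only: v_def)
    also have "\<dots> = s * (e * (f * f) * e) * s" by (simp add: mult.assoc)
    finally have "adj v * v = s * (e * (f * f) * e) * s" .
    then show ?thesis using seq ff by simp
  qed
  have ve: "v * e = v" by (simp add: v_def mult.assoc se)
  have fv: "f * v = v" by (simp add: v_def ff flip: mult.assoc)
  have vaf: "adj v * f = adj v" by (simp add: va mult.assoc ff)
  define g where "g = f - v * adj v"
  have gv: "g * v = 0" by (simp add: g_def left_diff_distrib fv mult.assoc vv ve)
  have gf: "g * f = g" by (simp add: g_def left_diff_distrib ff mult.assoc vaf)
  have ges: "g * e * s = 0"
  proof -
    have "g * e * s = g * f * e * s" by (simp add: gf)
    also have "\<dots> = g * v" by (simp add: v_def mult.assoc)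
    finally show ?thesis using gv by simp
  qed
  have ge: "g * e = 0"
  proof -
    have "g * e = g * e * e" by (simp add: mult.assoc ee)
    also have "\<dots> = g * e * (s * (e * f * e) * s)" by (simp only: seq)
    also have "\<dots> = (g * e * s) * ((e * f * e) * s)" by (simp only: mult.assoc)
    finally show ?thesis using ges by simp
  qed
  have "g = g * (f - e)" by (simp add: right_diff_distrib gf ge)
  then have "norm g \<le> norm g * norm (f - e)" by (metis norm_mult_ineq)
  moreover have "norm (f - e) \<le> 1/16" using ef by (simp add: norm_minus_commute)
  ultimately have "norm g \<le> norm g * (1/16)"
    by (meson mult_left_mono norm_ge_zero order_trans)
  then have "norm g = 0" using norm_ge_zero[of g] by argo
  then have "v * adj v = f" by (simp add: g_def)
  moreover have "norm (v - e) \<le> 2 * norm (e - f)"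
  proof -
    have "v - e = (f - e) * e + f * (e * k)"
      by (simp add: v_def s_def algebra_simps ee)
    then have "norm (v - e) \<le> norm ((f - e) * e) + norm (f * (e * k))"
      by (metis norm_triangle_ineq)
    also have "\<dots> \<le> norm (f - e) + norm k"
      by (intro add_mono norm_mult_le1' en) (simp add: ek norm_mult_le1 fn)
    finally show ?thesis using kn hn0 by (simp add: norm_minus_commute)
  qed
  ultimately show ?thesis using vv by blast
qed


lemma unit_cancel:
  assumes "unitary (u::'a::unital_cstar_algebra)"
  shows "adj u * (u * y) = y" "u * (adj u * y) = y" "adj u * u = 1" "u * adj u = 1"
  using assms by (auto simp: unitary_def simp flip: mult.assoc)

lemma proj_cancel:
  assumes "projection (p::'a::unital_cstar_algebra)"
  shows "p * (p * y) = p * y" "p * p = p" "adj p = p"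
  using assms by (auto simp: projection_def simp flip: mult.assoc)

lemma step:
  fixes p q um un :: "'a::unital_cstar_algebra"
  assumes pp: "projection p" and pq: "projection q" and um: "unitary um" and un: "unitary un"
    and Fq: "norm (adj un * p * un - q) \<le> 1/16"
  shows "\<exists>w. adj w * w = p \<and> w * adj w = q \<and>
     (norm (p - adj um * p * um) \<le> 1/16 \<longrightarrow>
        norm (w - adj un * p * um) \<le> 2 * norm (p - adj um * p * um) + 2 * norm (adj un * p * un - q)
             + norm (um * p - p * um))"
proof -
  note uc = unit_cancel[OF um] unit_cancel[OF un]
  note pc = proj_cancel[OF pp] proj_cancel[OF pq]
  define E where "E = adj um * p * um"
  define F where "F = adj un * p * un"
  define w0 where "w0 = adj un * p * um"
  have pE: "projection E"
    by (simp add: projection_def E_def adj_mult uc pc adj_adj mult.assoc)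
  have pF: "projection F"
    by (simp add: projection_def F_def adj_mult uc pc adj_adj mult.assoc)
  obtain VF where VF1: "adj VF * VF = F" and VF2: "VF * adj VF = q"
    and VF3: "norm (VF - F) \<le> 2 * norm (F - q)"
    using pi_lemma[OF pF pq] Fq F_def by blast
  have VFF: "VF * F = VF"
  proof -
    have "VF * F = VF * adj VF * VF" by (simp add: VF1 mult.assoc)
    also have "\<dots> = q * VF" by (simp add: VF2)
    finally have a: "VF * F = q * VF" .
    have "norm (VF * F - VF) = 0"
    proof -
      have "adj (VF * F - VF) * (VF * F - VF) = F * F - F * F - F * F + F"
        by (simp add: adj_diff adj_mult algebra_simps VF1 proj_cancel[OF pF] mult.assoc
            flip: mult.assoc[of "adj VF" VF])
      also have "\<dots> = 0" using proj_cancel[OF pF] by simp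
      finally show ?thesis by (metis cstar_identity norm_zero power_zero_numeral zero_eq_power2)
    qed
    then show ?thesis by simp
  qed
  have w0a: "adj w0 = adj um * p * un" by (simp add: w0_def adj_mult adj_adj pc mult.assoc)
  show ?thesis
  proof (cases "norm (p - E) \<le> 1/16")
    case True
    obtain VE where VE1: "adj VE * VE = p" and VE2: "VE * adj VE = E"
      and VE3: "norm (VE - p) \<le> 2 * norm (p - E)"
      using pi_lemma[OF pp pE True] by blast
    define w where "w = VF * w0 * VE"
    have VEp: "VE * p = VE"
    proof -
      have "norm (VE * p - VE) = 0"
      proof -
        have "adj (VE * p - VE) * (VE * p - VE) = p * p - p * p - p * p + p"
          by (simp add: adj_diff adj_mult algebra_simps VE1 pc mult.assoc
              flip: mult.assoc[of "adj VE" VE])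
        also have "\<dots> = 0" using pc by simp
        finally show ?thesis by (metis cstar_identity norm_zero power_zero_numeral zero_eq_power2)
      qed
      then show ?thesis by simp
    qed
    have VF1': "adj VF * (VF * y) = F * y" for y by (metis VF1 mult.assoc)
    have VE1': "adj VE * (VE * y) = p * y" for y by (metis VE1 mult.assoc)
    have VE2': "VE * (adj VE * y) = E * y" for y by (metis VE2 mult.assoc)
    have VF2': "VF * (adj VF * y) = q * y" for y by (metis VF2 mult.assoc)
    have Fw0: "F * (w0 * y) = w0 * y" for y by (simp add: F_def w0_def mult.assoc uc pc)
    have w0w0: "adj w0 * (w0 * y) = E * y" for y by (simp add: w0_def E_def adj_mult adj_adj mult.assoc uc pc)
    have w0E: "w0 * (E * y) = w0 * y" for y by (simp add: w0_def E_def mult.assoc uc pc)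
    have w0w0': "w0 * (adj w0 * y) = F * y" for y by (simp add: w0_def F_def adj_mult adj_adj mult.assoc uc pc)
    have EVE: "E * VE = VE" by (metis VE1 VE2 VEp mult.assoc)
    have VFFy: "VF * (F * y) = VF * y" for y by (metis VFF mult.assoc)
    have "adj w * w = adj VE * (adj w0 * (F * (w0 * VE)))" by (simp add: w_def adj_mult mult.assoc VF1')
    also have "\<dots> = p" by (simp add: Fw0 w0w0 EVE VE1)
    finally have c1: "adj w * w = p" .
    have "w * adj w = VF * (w0 * (E * (adj w0 * adj VF)))" by (simp add: w_def adj_mult mult.assoc VE2')
    also have "\<dots> = q" by (simp add: w0E w0w0' VFFy VF2)
    finally have c2: "w * adj w = q" .
    have e1: "adj un * p * (um * p - p * um) = w0 * p - w0" by (simp add: w0_def algebra_simps pc mult.assoc)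
    have "w - w0 = (VF - F) * w0 * VE + w0 * (VE - p) + (w0 * p - w0)"
      by (simp add: w_def algebra_simps Fw0 mult.assoc)
    also have "\<dots> = (VF - F) * w0 * VE + w0 * (VE - p) + adj un * p * (um * p - p * um)"
      by (simp add: e1)
    finally have eqw: "w - w0 = (VF - F) * w0 * VE + w0 * (VE - p) + adj un * p * (um * p - p * um)" .
    have nE: "norm E \<le> 1" using pE proj_norm by blast
    have nw0: "norm w0 \<le> 1" using norm_le_one_if[OF w0w0[of 1, simplified] nE] .
    have nVE: "norm VE \<le> 1" using norm_le_one_if[OF VE1 proj_norm[OF pp]] .
    have nup: "norm (adj un * p) \<le> 1"
      using norm_mult_le1[OF unitary_norm_adj[OF un], of p] proj_norm[OF pp] by linarith
    have "norm (w - w0) \<le> norm ((VF - F) * w0 * VE) + norm (w0 * (VE - p)) + norm (adj un * p * (um * p - p * um))"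
      unfolding eqw by (rule norm3)
    also have "\<dots> \<le> norm (VF - F) + norm (VE - p) + norm (um * p - p * um)"
      by (intro add_mono norm_mult_le1 nw0 nup norm_mult_le1' nVE order_trans[OF norm_mult_le1'[OF nVE]] norm_mult_le1'[OF nw0])
    finally have c3: "norm (w - w0) \<le> 2 * norm (p - E) + 2 * norm (F - q) + norm (um * p - p * um)"
      using VE3 VF3 by linarith
    show ?thesis using c1 c2 c3 E_def F_def w0_def by blast
  next
    case False
    define w where "w = VF * adj un * p"
    have VF1': "adj VF * (VF * y) = F * y" for y by (metis VF1 mult.assoc)
    have VFFy: "VF * (F * y) = VF * y" for y by (metis VFF mult.assoc)
    have "adj w * w = p" by (simp add: w_def adj_mult adj_adj pc mult.assoc VF1' F_def uc)
    moreover have "w * adj w = q"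
    proof -
      have "w * adj w = VF * (F * adj VF)" by (simp add: w_def adj_mult adj_adj pc mult.assoc F_def uc)
      then show ?thesis by (simp add: VFFy VF2)
    qed
    ultimately show ?thesis using False E_def by blast
  qed
qed


lemma diag:
  fixes c :: "nat \<Rightarrow> nat \<Rightarrow> real"
  assumes lim: "\<And>m. (\<lambda>j. c m j) \<longlonglongrightarrow> 0"
  shows "\<exists>mm. filterlim mm at_top sequentially \<and> (\<lambda>j. c (mm j) j) \<longlonglongrightarrow> 0"
proof -
  have "\<forall>K. \<exists>J. \<forall>j\<ge>J. norm (c K j) < 1 / (real K + 1)"
  proof
    fix K
    have "(1::real) / (real K + 1) > 0" by simp
    then show "\<exists>J. \<forall>j\<ge>J. norm (c K j) < 1 / (real K + 1)"
      using lim[of K] unfolding LIMSEQ_iff by simp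
  qed
  then obtain g where g: "\<And>K j. j \<ge> g K \<Longrightarrow> norm (c K j) < 1 / (real K + 1)"
    by metis
  define M where "M j = {K. K \<le> j \<and> g K \<le> j} \<union> {0}" for j
  define mm where "mm j = Max (M j)" for j
  have finM: "finite (M j)" for j
    by (rule finite_subset[of _ "{..j}"]) (auto simp: M_def)
  have mmM: "mm j \<in> M j" for j
    unfolding mm_def by (rule Max_in[OF finM]) (auto simp: M_def)
  have geK: "mm j \<ge> K" if "j \<ge> K" "j \<ge> g K" for j K
    unfolding mm_def by (rule Max_ge[OF finM]) (use that in \<open>auto simp: M_def\<close>)
  have "filterlim mm at_top sequentially"
    unfolding filterlim_at_top
  proof
    fix K
    show "\<forall>\<^sub>F j in sequentially. K \<le> mm j"
      unfolding eventually_sequentially using geK by (intro exI[of _ "max K (g K)"]) auto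
  qed
  moreover have "(\<lambda>j. c (mm j) j) \<longlonglongrightarrow> 0"
    unfolding LIMSEQ_iff
  proof (intro allI impI)
    fix r :: real assume r: "r > 0"
    obtain K :: nat where K: "1 / (real K + 1) < r"
      using r by (metis add.commute nat_approx_posE of_nat_Suc one_divide_eq_0_iff)
    show "\<exists>N. \<forall>j\<ge>N. norm (c (mm j) j - 0) < r"
    proof (intro exI[of _ "max (max K (g K)) (g 0)"] allI impI)
      fix j assume j: "max (max K (g K)) (g 0) \<le> j"
      then have k1: "mm j \<ge> K" using geK by auto
      have k2: "g (mm j) \<le> j" using mmM[of j] j by (auto simp: M_def)
      have "norm (c (mm j) j) < 1 / (real (mm j) + 1)" using g[OF k2] .
      also have "\<dots> \<le> 1 / (real K + 1)" using k1 by (simp add: frac_le)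
      finally show "norm (c (mm j) j - 0) < r" using K by simp
    qed
  qed
  ultimately show ?thesis by blast
qed

lemma comm_est:
  fixes um un p a c :: "'a::unital_cstar_algebra"
  assumes um: "unitary um" and un: "unitary un" and pp: "projection p"
  shows "norm ((adj un * p * um) * a - a * (adj un * p * um))
     \<le> norm (um * a * adj um - c) + norm (p * c - c * p) + norm (un * a * adj un - c)"
proof -
  note uc = unit_cancel[OF um] unit_cancel[OF un]
  have "(adj un * p * um) * a - a * (adj un * p * um) = adj un * (p * (um * a * adj um) - (un * a * adj un) * p) * um"
    by (simp add: algebra_simps uc mult.assoc)
  also have "p * (um * a * adj um) - (un * a * adj un) * p
     = p * (um * a * adj um - c) + (p * c - c * p) + (c - un * a * adj un) * p"
    by (simp add: algebra_simps)
  finally have eq: "(adj un * p * um) * a - a * (adj un * p * um) = adj un * (p * (um * a * adj um - c) + (p * c - c * p) + (c - un * a * adj un) * p) * um" .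
  have np: "norm p \<le> 1" using pp proj_norm by blast
  have "norm ((adj un * p * um) * a - a * (adj un * p * um)) \<le> norm (p * (um * a * adj um - c) + (p * c - c * p) + (c - un * a * adj un) * p)"
    unfolding eq by (metis norm_mult_le1 norm_mult_le1' unitary_norm unitary_norm_adj um un order_trans)
  also have "\<dots> \<le> norm (p * (um * a * adj um - c)) + norm (p * c - c * p) + norm ((c - un * a * adj un) * p)"
    by (rule norm3)
  also have "\<dots> \<le> norm (um * a * adj um - c) + norm (p * c - c * p) + norm (un * a * adj un - c)"
    by (intro add_mono norm_mult_le1 norm_mult_le1' np order_refl) (simp add: norm_minus_commute norm_mult_le1' np)
  finally show ?thesis .
qed

lemma comm_pert:
  fixes w w0 a :: "'a::real_normed_algebra"
  shows "norm (w * a - a * w) \<le> norm (w0 * a - a * w0) + 2 * norm a * norm (w - w0)"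
proof -
  have eqc: "w * a - a * w = (w0 * a - a * w0) + (w - w0) * a - a * (w - w0)" by (simp add: algebra_simps)
  have "norm (w * a - a * w) \<le> norm (w0 * a - a * w0) + norm ((w - w0) * a) + norm (a * (w - w0))"
    unfolding eqc by (rule norm3m)
  also have "\<dots> \<le> norm (w0 * a - a * w0) + norm (w - w0) * norm a + norm a * norm (w - w0)"
    by (intro add_mono norm_mult_ineq order_refl)
  finally show ?thesis by (simp add: algebra_simps)
qed


theorem lemma3p1:
  fixes \<alpha> :: "'a::unital_cstar_algebra \<Rightarrow> 'a"
    and p :: "nat \<Rightarrow> 'a"
  assumes "separable_space TYPE('a)"
    and "is_automorphism \<alpha>"
    and "approximately_inner \<alpha>"
    and "\<forall>j. projection (p j)"
    and "central_sequence p"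
  shows "\<exists>w :: nat \<Rightarrow> 'a. central_sequence w \<and> (\<forall>j. partial_isometry (w j))
           \<and> (\<forall>j. adj (w j) * w j = p j \<and> w j * adj (w j) = \<alpha> (p j))"
proof -
  obtain u where uu: "\<And>n. unitary (u n)"
    and ui: "\<And>a. (\<lambda>n. norm (adj (u n) * a * u n - \<alpha> a)) \<longlonglongrightarrow> 0"
    using assms(3) unfolding approximately_inner_def by blast
  have bij: "bij \<alpha>" and amul: "\<And>x y. \<alpha> (x * y) = \<alpha> x * \<alpha> y"
    and aadj: "\<And>x. \<alpha> (adj x) = adj (\<alpha> x)"
    using assms(2) unfolding is_automorphism_def by auto
  have pp: "projection (p j)" for j using assms(4) by blast
  have pa: "projection (\<alpha> (p j))" for j
    using pp[of j] by (simp add: projection_def flip: aadj amul)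
  have cen: "\<And>a. (\<lambda>j. norm (p j * a - a * p j)) \<longlonglongrightarrow> 0"
    using assms(5) unfolding central_sequence_def by blast
  obtain mm where mmlim: "filterlim mm at_top sequentially"
    and cmlim: "(\<lambda>j. norm (p j * u (mm j) - u (mm j) * p j)) \<longlonglongrightarrow> 0"
    using diag[of "\<lambda>m j. norm (p j * u m - u m * p j)", OF cen] by blast
  define \<delta> where "\<delta> j = inverse (real (Suc j)) / 16" for j
  have \<delta>pos: "\<delta> j > 0" for j by (simp add: \<delta>_def)
  have \<delta>le: "\<delta> j \<le> 1/16" for j by (simp add: \<delta>_def field_simps)
  have \<delta>lim: "\<delta> \<longlonglongrightarrow> 0"
    unfolding \<delta>_def by (intro tendsto_divide_zero LIMSEQ_inverse_real_of_nat)
  have "\<forall>j. \<exists>n. n \<ge> j \<and> norm (adj (u n) * p j * u n - \<alpha> (p j)) < \<delta> j"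
  proof
    fix j
    obtain N where N: "\<forall>n\<ge>N. norm (norm (adj (u n) * p j * u n - \<alpha> (p j)) - 0) < \<delta> j"
      using ui[of "p j"] \<delta>pos[of j] unfolding LIMSEQ_iff by blast
    then show "\<exists>n. n \<ge> j \<and> norm (adj (u n) * p j * u n - \<alpha> (p j)) < \<delta> j"
      by (intro exI[of _ "max N j"]) auto
  qed
  then obtain nn where nnj: "\<And>j. nn j \<ge> j"
    and nnF: "\<And>j. norm (adj (u (nn j)) * p j * u (nn j) - \<alpha> (p j)) < \<delta> j"
    by metis
  have nnlim: "filterlim nn at_top sequentially"
    unfolding filterlim_at_top eventually_sequentially
    using nnj le_trans by blast
  define E where "E j = adj (u (mm j)) * p j * u (mm j)" for j
  define F where "F j = adj (u (nn j)) * p j * u (nn j)" for j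
  define w0 where "w0 j = adj (u (nn j)) * p j * u (mm j)" for j
  define err where "err j = 2 * norm (p j - E j) + 2 * norm (F j - \<alpha> (p j))
      + norm (u (mm j) * p j - p j * u (mm j))" for j
  have "\<forall>j. \<exists>w. adj w * w = p j \<and> w * adj w = \<alpha> (p j) \<and>
     (norm (p j - E j) \<le> 1/16 \<longrightarrow> norm (w - w0 j) \<le> err j)"
  proof
    fix j
    have "norm (adj (u (nn j)) * p j * u (nn j) - \<alpha> (p j)) \<le> 1/16"
      using nnF[of j] \<delta>le[of j] by linarith
    from step[of "p j" "\<alpha> (p j)" "u (mm j)" "u (nn j)", OF pp pa uu uu this]
    show "\<exists>w. adj w * w = p j \<and> w * adj w = \<alpha> (p j) \<and>
     (norm (p j - E j) \<le> 1/16 \<longrightarrow> norm (w - w0 j) \<le> err j)"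
      unfolding E_def F_def w0_def err_def by blast
  qed
  then obtain W where W1: "\<And>j. adj (W j) * W j = p j" and W2: "\<And>j. W j * adj (W j) = \<alpha> (p j)"
    and W3: "\<And>j. norm (p j - E j) \<le> 1/16 \<Longrightarrow> norm (W j - w0 j) \<le> err j"
    by metis
  have cmlim': "(\<lambda>j. norm (u (mm j) * p j - p j * u (mm j))) \<longlonglongrightarrow> 0"
    using cmlim by (simp add: norm_minus_commute)
  have Ebound: "norm (p j - E j) \<le> norm (u (mm j) * p j - p j * u (mm j))" for j
  proof -
    have "p j - E j = adj (u (mm j)) * (u (mm j) * p j - p j * u (mm j))"
      by (simp add: E_def algebra_simps unit_cancel[OF uu] mult.assoc)
    then show ?thesis by (metis norm_mult_le1 unitary_norm_adj uu)
  qed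
  have Elim: "(\<lambda>j. norm (p j - E j)) \<longlonglongrightarrow> 0"
    by (rule Lim_null_comparison[OF _ cmlim']) (simp add: Ebound)
  have Flim: "(\<lambda>j. norm (F j - \<alpha> (p j))) \<longlonglongrightarrow> 0"
    by (rule Lim_null_comparison[OF _ \<delta>lim]) (simp add: F_def less_imp_le[OF nnF])
  have errlim: "err \<longlonglongrightarrow> 0"
    unfolding err_def
    by (intro tendsto_add_zero tendsto_mult_right_zero Elim Flim cmlim')
  have evE: "\<forall>\<^sub>F j in sequentially. norm (p j - E j) \<le> 1/16"
  proof -
    have "\<forall>\<^sub>F j in sequentially. norm (p j - E j) < 1/16"
      using order_tendstoD(2)[OF Elim, of "1/16"] by simp
    then show ?thesis by (rule eventually_mono) simp
  qed
  have "central_sequence W"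
    unfolding central_sequence_def
  proof
    fix a
    define c where "c = inv \<alpha> a"
    have ac: "\<alpha> c = a" unfolding c_def by (simp add: bij bij_is_surj surj_f_inv_f)
    have bk: "(\<lambda>k. norm (u k * a * adj (u k) - c)) \<longlonglongrightarrow> 0"
    proof (rule Lim_null_comparison[OF _ ui[of c]], intro always_eventually allI)
      fix k
      have "u k * a * adj (u k) - c = u k * (\<alpha> c - adj (u k) * c * u k) * adj (u k)"
        by (simp add: ac algebra_simps unit_cancel[OF uu] mult.assoc)
      then have "norm (u k * a * adj (u k) - c) \<le> norm (\<alpha> c - adj (u k) * c * u k)"
        by (metis norm_mult_le1 norm_mult_le1' unitary_norm_adj unitary_norm uu order_trans)
      then show "norm (norm (u k * a * adj (u k) - c)) \<le> norm (adj (u k) * c * u k - \<alpha> c)"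
        by (simp add: norm_minus_commute)
    qed
    have bm: "(\<lambda>j. norm (u (mm j) * a * adj (u (mm j)) - c)) \<longlonglongrightarrow> 0"
      using filterlim_compose[OF bk mmlim] by simp
    have bn: "(\<lambda>j. norm (u (nn j) * a * adj (u (nn j)) - c)) \<longlonglongrightarrow> 0"
      using filterlim_compose[OF bk nnlim] by simp
    have bound: "(\<lambda>j. norm (u (mm j) * a * adj (u (mm j)) - c) + norm (p j * c - c * p j)
        + norm (u (nn j) * a * adj (u (nn j)) - c) + 2 * norm a * err j) \<longlonglongrightarrow> 0"
      by (intro tendsto_add_zero tendsto_mult_right_zero bm bn cen errlim)
    show "(\<lambda>j. norm (W j * a - a * W j)) \<longlonglongrightarrow> 0"
    proof (rule Lim_null_comparison[OF _ bound])
      show "\<forall>\<^sub>F j in sequentially. norm (norm (W j * a - a * W j)) \<le>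
         norm (u (mm j) * a * adj (u (mm j)) - c) + norm (p j * c - c * p j)
        + norm (u (nn j) * a * adj (u (nn j)) - c) + 2 * norm a * err j"
      proof (rule eventually_mono[OF evE])
        fix j assume "norm (p j - E j) \<le> 1/16"
        then have e: "norm (W j - w0 j) \<le> err j" by (rule W3)
        have "norm (W j * a - a * W j) \<le> norm (w0 j * a - a * w0 j) + 2 * norm a * norm (W j - w0 j)"
          by (rule comm_pert)
        also have "\<dots> \<le> norm (u (mm j) * a * adj (u (mm j)) - c) + norm (p j * c - c * p j)
          + norm (u (nn j) * a * adj (u (nn j)) - c) + 2 * norm a * err j"
          unfolding w0_def
          by (intro add_mono comm_est uu pp mult_left_mono e[unfolded w0_def]) auto
        finally show "norm (norm (W j * a - a * W j)) \<le>
         norm (u (mm j) * a * adj (u (mm j)) - c) + norm (p j * c - c * p j)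
        + norm (u (nn j) * a * adj (u (nn j)) - c) + 2 * norm a * err j" by simp
      qed
    qed
  qed
  moreover have "partial_isometry (W j)" for j
    by (simp add: partial_isometry_def W1 pp)
  ultimately show ?thesis using W1 W2 by blast
qed

end
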